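(* Let $\mathbf d=(d_1,\ldots,d_n)$ be a graphical degree sequence and let $H_1$ and $H_2$ be two edge-disjoint graphs on $[n]$. Suppose that $\mathbf d^{H_1}\preceq \mathbf d$ and that $uv\notin H_1\cup H_2$. Then \[ \mathbb P\big(uv\in \mathcal G(n,\mathbf d)\mid H_1^+, H_2^-\big)\le \frac{(d_u-d^{H_1}_u)(d_v-d^{H_1}_v)}{M-2e(H_1)}\cdot f(\mathbf d,H_1,H_2), \] \[ \mathbb P\big(uv\in \mathcal G(n,\mathbf d)\mid H_1^+, H_2^-\big)\ge \frac{(d_u-d^{H_1}_u)(d_v-d^{H_1}_v)}{M-2e(H_1)}\cdot g(\mathbf d,H_1,H_2), \] where \[ f(\mathbf d,H_1,H_2)=\left(1-\frac{3J(\mathbf d)+\Delta(8+d_u^{H_2}+d_v^{H_2})}{M-2e(H_1)}-\frac{2e(H_2)\Delta^2}{(M-2e(H_1))^2}+\frac{(d_v-d_v^{H_1})(d_u-d_u^{H_1})}{M-2e(H_1)}\right)^{-1}, \] \[ g(\mathbf d,H_1,H_2)=\left(1- \frac{2J(\mathbf d)+6\Delta+2\Delta(H_2)\Delta}{M-2e(H_1)} \right)\left(1+ \frac{(d_v-d_v^{H_1})(d_u-d_u^{H_1})}{M-2e(H_1)} \right)^{-1}. \]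
   Context: For a sequence $\mathbf d=(d_1,\ldots,d_n)$ of nonnegative integers, $\mathcal G(n,\mathbf d)$ denotes a uniformly random simple graph on vertex set $[n]$ in which vertex $i$ has degree $d_i$ for every $i$; $\mathbf d$ is graphical if at least one such graph exists. $\Delta=\max_i d_i$, $M=\sum_{i=1}^n d_i$, and $J(\mathbf d)$ is the sum of the $\Delta$ largest entries of $\mathbf d$ (i.e. if $d_1\ge d_2\ge\cdots\ge d_n$, then $J(\mathbf d)=\sum_{i=1}^{\Delta}d_i$). For a graph $H$ on $[n]$, $e(H)$ is its number of edges, $\Delta(H)$ its maximum degree, and $d^H_i$ the degree of vertex $i$ in $H$; $\mathbf d^H=(d^H_1,\dots,d^H_n)$, and $\mathbf d^H\preceq\mathbf d$ means $d^H_i\le d_i$ for all $i$. Graphs on $[n]$ are identified with their edge sets; two such graphs are disjoint if their edge sets are disjoint. $H^+$ denotes the event $H\subseteq\mathcal G(n,\mathbf d)$, and $H^-$ denotes the event that $\mathcal G(n,\mathbf d)$ contains no edge of $H$.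
   Formalization: The upper bound with $f(\mathbf d,H_1,H_2)$ holds only under the extra condition that the bracket whose inverse defines f is positive; if that bracket is nonpositive, no upper bound is claimed. The statement above fails without it. *)

theory Defs
  imports Complex_Main
begin

text \<open>Graphs on the vertex set [n] = {1..n} are identified with their edge sets,
  an edge being a 2-element set of vertices.\<close>

definition all_edges :: "nat \<Rightarrow> nat set set" where
  "all_edges n = {e. \<exists>i j. i \<in> {1..n} \<and> j \<in> {1..n} \<and> i \<noteq> j \<and> e = {i, j}}"

definition graph_on :: "nat \<Rightarrow> nat set set \<Rightarrow> bool" where
  "graph_on n H \<longleftrightarrow> H \<subseteq> all_edges n"

definition deg :: "nat set set \<Rightarrow> nat \<Rightarrow> nat" where
  "deg H i = card {e \<in> H. i \<in> e}"

definition max_deg_graph :: "nat \<Rightarrow> nat set set \<Rightarrow> nat" where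
  "max_deg_graph n H = Max (insert 0 (deg H ` {1..n}))"

definition realizations :: "nat \<Rightarrow> (nat \<Rightarrow> nat) \<Rightarrow> nat set set set" where
  "realizations n d = {G. graph_on n G \<and> (\<forall>i\<in>{1..n}. deg G i = d i)}"

definition graphical :: "nat \<Rightarrow> (nat \<Rightarrow> nat) \<Rightarrow> bool" where
  "graphical n d \<longleftrightarrow> realizations n d \<noteq> {}"

definition Delta :: "nat \<Rightarrow> (nat \<Rightarrow> nat) \<Rightarrow> nat" where
  "Delta n d = Max (insert 0 (d ` {1..n}))"

definition Msum :: "nat \<Rightarrow> (nat \<Rightarrow> nat) \<Rightarrow> nat" where
  "Msum n d = (\<Sum>i\<in>{1..n}. d i)"

definition Jsum :: "nat \<Rightarrow> (nat \<Rightarrow> nat) \<Rightarrow> nat" where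
  "Jsum n d = sum_list (take (Delta n d) (rev (sort (map d [1..<n+1]))))"

text \<open>Probability, for the uniform random graph G(n,d), that uv is an edge
  conditioned on H1 \<subseteq> G and G having no edge of H2.\<close>
definition cond_prob_edge ::
  "nat \<Rightarrow> (nat \<Rightarrow> nat) \<Rightarrow> nat set set \<Rightarrow> nat set set \<Rightarrow> nat \<Rightarrow> nat \<Rightarrow> real" where
  "cond_prob_edge n d H1 H2 u v =
     real (card {G \<in> realizations n d. H1 \<subseteq> G \<and> G \<inter> H2 = {} \<and> {u, v} \<in> G})
     / real (card {G \<in> realizations n d. H1 \<subseteq> G \<and> G \<inter> H2 = {}})"

end

theory Submission
  imports Defs "HOL-Library.Multiset"
begin

lemma all_edges_sub: "all_edges n \<subseteq> (\<lambda>(i,j). {i,j}) ` ({1..n} \<times> {1..n})"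
  unfolding all_edges_def by auto

lemma finite_all_edges: "finite (all_edges n)"
  by (rule finite_subset[OF all_edges_sub]) auto

lemma graph_on_finite: "graph_on n E \<Longrightarrow> finite E"
  unfolding graph_on_def using finite_all_edges finite_subset by blast

lemma edge_mem: "graph_on n E \<Longrightarrow> {a,b} \<in> E \<Longrightarrow> a \<in> {1..n} \<and> b \<in> {1..n} \<and> a \<noteq> b"
proof -
  assume "graph_on n E" "{a,b} \<in> E"
  then obtain i j where "i\<in>{1..n}" "j\<in>{1..n}" "i\<noteq>j" "{a,b}={i,j}"
    unfolding graph_on_def all_edges_def by blast
  then show ?thesis by (auto simp: doubleton_eq_iff)
qed

lemma edge_form: "graph_on n E \<Longrightarrow> e \<in> E \<Longrightarrow> \<exists>a b. e = {a,b} \<and> a \<in> {1..n} \<and> b \<in> {1..n} \<and> a \<noteq> b"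
  unfolding graph_on_def all_edges_def by blast

definition nb :: "nat set set \<Rightarrow> nat \<Rightarrow> nat set" where
  "nb E a = {b. {a,b} \<in> E}"

definition oe :: "nat set set \<Rightarrow> (nat \<times> nat) set" where
  "oe E = {(a,b). {a,b} \<in> E}"

lemma nb_sub: assumes g: "graph_on n E" shows "nb E a \<subseteq> {1..n}"
  unfolding nb_def using edge_mem[OF g, of a] by auto

lemma finite_nb: assumes g: "graph_on n E" shows "finite (nb E a)"
  by (rule finite_subset[OF nb_sub[OF g]]) simp

lemma card_nb: assumes "graph_on n E" shows "card (nb E a) = deg E a"
proof -
  have "bij_betw (\<lambda>b. {a,b}) (nb E a) {e \<in> E. a \<in> e}"
  proof (rule bij_betwI')
    fix x y assume "x \<in> nb E a" "y \<in> nb E a"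
    then have "a \<noteq> x" "a \<noteq> y" using edge_mem[OF assms, of a x] edge_mem[OF assms, of a y] unfolding nb_def by auto
    then show "({a, x} = {a, y}) = (x = y)" by (auto simp: doubleton_eq_iff)
  next
    fix x assume "x \<in> nb E a" then show "{a, x} \<in> {e \<in> E. a \<in> e}" unfolding nb_def by auto
  next
    fix y assume "y \<in> {e \<in> E. a \<in> e}"
    then obtain p q where y: "y = {p,q}" "y \<in> E" "a \<in> y" using edge_form[OF assms] by blast
    show "\<exists>x\<in>nb E a. y = {a, x}"
    proof (cases "a = p")
      case True then show ?thesis using y by (intro bexI[of _ q]) (auto simp: nb_def)
    next
      case False then have "a = q" using y by auto
      then have "y = {a,p}" using y by auto
      then show ?thesis using y by (intro bexI[of _ p]) (auto simp: nb_def)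
    qed
  qed
  then show ?thesis unfolding deg_def by (simp add: bij_betw_same_card)
qed

lemma oe_sigma: assumes g: "graph_on n E" shows "oe E = Sigma {1..n} (nb E)"
  by (auto simp: oe_def nb_def dest: edge_mem[OF g])

lemma finite_oe: "graph_on n E \<Longrightarrow> finite (oe E)"
  by (simp add: oe_sigma finite_nb)


lemma card_oe: "graph_on n E \<Longrightarrow> card (oe E) = (\<Sum>a\<in>{1..n}. deg E a)"
  by (simp add: oe_sigma card_SigmaI finite_nb card_nb)

lemma handshake: assumes "graph_on n E" shows "(\<Sum>a\<in>{1..n}. deg E a) = 2 * card E"
proof -
  have fE: "finite E" using graph_on_finite[OF assms] .
  have "(\<Sum>a\<in>{1..n}. deg E a) = (\<Sum>a\<in>{1..n}. \<Sum>e\<in>E. if a \<in> e then 1 else 0)"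
    unfolding deg_def using fE by (intro sum.cong refl) (simp add: sum.If_cases, rule arg_cong[where f=card], blast)
  also have "\<dots> = (\<Sum>e\<in>E. \<Sum>a\<in>{1..n}. if a \<in> e then 1 else 0)" by (rule sum.swap)
  also have "\<dots> = (\<Sum>e\<in>E. 2)"
  proof (rule sum.cong)
    fix e assume "e \<in> E"
    then obtain p q where e: "e = {p,q}" "p \<in> {1..n}" "q \<in> {1..n}" "p \<noteq> q" using edge_form[OF assms] by blast
    have "(\<Sum>a\<in>{1..n}. if a \<in> e then 1 else 0) = card ({1..n} \<inter> e)"
      by (simp add: sum.If_cases)
    also have "{1..n} \<inter> e = {p,q}" using e by auto
    finally show "(\<Sum>a\<in>{1..n}. if a \<in> e then 1 else (0::nat)) = 2" using e by simp
  qed simp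
  finally show ?thesis by simp
qed

lemma oe_swap: "(a,b) \<in> oe E \<longleftrightarrow> (b,a) \<in> oe E"
  unfolding oe_def by (simp add: insert_commute)

lemma card_oe_fst: assumes "graph_on n E" "finite S"
  shows "card {p \<in> oe E. fst p \<in> S} \<le> (\<Sum>a\<in>S. deg E a)"
proof -
  have "{p \<in> oe E. fst p \<in> S} \<subseteq> Sigma S (nb E)" unfolding oe_def nb_def by auto
  then have "card {p \<in> oe E. fst p \<in> S} \<le> card (Sigma S (nb E))"
    by (intro card_mono) (auto intro: finite_SigmaI assms finite_nb)
  also have "\<dots> = (\<Sum>a\<in>S. deg E a)" using assms by (simp add: card_SigmaI finite_nb card_nb)
  finally show ?thesis .
qed

lemma card_oe_snd: assumes "graph_on n E" "finite S"
  shows "card {p \<in> oe E. snd p \<in> S} \<le> (\<Sum>a\<in>S. deg E a)"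
proof -
  have "{p \<in> oe E. snd p \<in> S} = prod.swap ` {p \<in> oe E. fst p \<in> S}"
    using oe_swap by force
  then have "card {p \<in> oe E. snd p \<in> S} \<le> card {p \<in> oe E. fst p \<in> S}"
    by (simp add: card_image)
  then show ?thesis using card_oe_fst[OF assms] by linarith
qed

lemma top_sum:
  "sorted_wrt (\<lambda>x y. x \<ge> y) xs \<Longrightarrow> X \<subseteq># mset xs \<Longrightarrow> size X \<le> k
   \<Longrightarrow> sum_mset X \<le> sum_list (take k (xs::nat list))"
proof (induction xs arbitrary: X k)
  case Nil then show ?case by simp
next
  case (Cons y ys)
  have sy: "\<forall>z\<in>set ys. z \<le> y" and sys: "sorted_wrt (\<lambda>x y. x \<ge> y) ys" using Cons.prems(1) by auto
  show ?case
  proof (cases k)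
    case 0 then show ?thesis using Cons.prems(3) by simp
  next
    case (Suc k')
    show ?thesis
    proof (cases "y \<in># X")
      case True
      then obtain X' where X: "X = add_mset y X'" by (metis multi_member_split)
      have "X' \<subseteq># mset ys" using Cons.prems(2) X by simp
      moreover have "size X' \<le> k'" using Cons.prems(3) X Suc by simp
      ultimately have "sum_mset X' \<le> sum_list (take k' ys)" by (rule Cons.IH[OF sys])
      then show ?thesis using X Suc by simp
    next
      case False
      have sub: "X \<subseteq># mset ys"
      proof (rule mset_subset_eqI)
        fix a
        have "count X a \<le> count (add_mset y (mset ys)) a" using mset_subset_eq_count[OF Cons.prems(2), of a] by simp
        then show "count X a \<le> count (mset ys) a" using False by (cases "a = y") (auto simp: not_in_iff)
      qed
      show ?thesis
      proof (cases "X = {#}")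
        case True then show ?thesis by simp
      next
        case False
        then obtain z X' where X: "X = add_mset z X'" by (metis multiset_cases)
        have "z \<in># X" using X by simp
        then have "z \<in># mset ys" by (rule mset_subset_eqD[OF sub])
        then have zy: "z \<le> y" using sy by simp
        have "X' \<subseteq># X" using X by simp
        then have "X' \<subseteq># mset ys" using sub by (rule subset_mset.order_trans)
        moreover have "size X' \<le> k'" using Cons.prems(3) X Suc by simp
        ultimately have "sum_mset X' \<le> sum_list (take k' ys)" by (rule Cons.IH[OF sys])
        then show ?thesis using X Suc zy by simp
      qed
    qed
  qed
qed

lemma J_bound:
  assumes "S \<subseteq> {1..n}" "card S \<le> Delta n d"
  shows "(\<Sum>i\<in>S. d i) \<le> Jsum n d"
proof -
  have fS: "finite S" by (rule finite_subset[OF assms(1)]) simp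
  let ?xs = "rev (sort (map d [1..<n+1]))"
  have "sorted_wrt (\<lambda>x y. x \<ge> y) ?xs" by (simp add: sorted_wrt_rev)
  moreover have "image_mset d (mset_set S) \<subseteq># mset ?xs"
  proof -
    have "mset ?xs = image_mset d (mset_set {1..<n+1})" by (simp only: mset_rev mset_sort mset_map mset_upt)
    moreover have "mset_set S \<subseteq># mset_set {1..<n+1}" using assms(1) fS by auto
    ultimately show ?thesis by (simp add: image_mset_subseteq_mono)
  qed
  moreover have "size (image_mset d (mset_set S)) \<le> Delta n d" using assms(2) by simp
  ultimately have "sum_mset (image_mset d (mset_set S)) \<le> sum_list (take (Delta n d) ?xs)"
    by (rule top_sum)
  then show ?thesis unfolding Jsum_def by (simp add: sum_unfold_sum_mset)
qed

lemma d_le_Delta: "i \<in> {1..n} \<Longrightarrow> d i \<le> Delta n d"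
  unfolding Delta_def by (rule Max_ge) auto

lemma deg_le_maxdeg: "i \<in> {1..n} \<Longrightarrow> deg H i \<le> max_deg_graph n H"
  unfolding max_deg_graph_def by (rule Max_ge) auto

lemma upper_real:
  fixes a b x M J D du dv e2 :: real
  assumes a0: "a \<ge> 0" and b0: "b \<ge> 0" and ab: "a + b > 0" and x0: "x \<ge> 0"
    and J0: "J \<ge> 0" and D0: "D \<ge> 0" and du: "du \<ge> 0" and dv: "dv \<ge> 0" and e2: "e2 \<ge> 0"
    and M0: "M \<ge> 0" and aM: "a > 0 \<Longrightarrow> M > 0"
    and key: "a * (M - (2*J + 4*D + D*(du+dv))) \<le> x * b"
    and E: "1 - (3 * J + D * (8 + du + dv)) / M - 2 * e2 * D ^ 2 / M ^ 2 + x / M > 0"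
  shows "a / (a + b) \<le> x / M * inverse (1 - (3 * J + D * (8 + du + dv)) / M - 2 * e2 * D ^ 2 / M ^ 2 + x / M)"
proof (cases "a = 0")
  case True
  have "x / M \<ge> 0" using x0 M0 by simp
  moreover have "inverse (1 - (3 * J + D * (8 + du + dv)) / M - 2 * e2 * D ^ 2 / M ^ 2 + x / M) > 0"
    using E by simp
  ultimately have "x / M * inverse (1 - (3 * J + D * (8 + du + dv)) / M - 2 * e2 * D ^ 2 / M ^ 2 + x / M) \<ge> 0"
    by (intro mult_nonneg_nonneg) auto
  then show ?thesis using True by simp
next
  case False
  then have ap: "a > 0" using a0 by simp
  then have Mp: "M > 0" using aM by simp
  define S where "S = 3 * J + D * (8 + du + dv) + 2 * e2 * D ^ 2 / M"
  have Eeq: "1 - (3 * J + D * (8 + du + dv)) / M - 2 * e2 * D ^ 2 / M ^ 2 + x / M = (M - S + x) / M"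
    using Mp unfolding S_def by (simp add: field_simps power2_eq_square)
  have pos: "M - S + x > 0" using E Mp unfolding Eeq by (simp add: zero_less_divide_iff)
  have SS: "S \<ge> 2*J + 4*D + D*(du+dv)" unfolding S_def using J0 D0 e2 Mp by (simp add: algebra_simps)
  have "a * (M - S) \<le> a * (M - (2*J + 4*D + D*(du+dv)))" using SS ap by (simp add: mult_left_mono)
  then have k2: "a * (M - S + x) \<le> x * (a + b)" using key by (simp add: algebra_simps)
  have "x / M * inverse ((M - S + x) / M) = x / (M - S + x)" using Mp pos by (simp add: field_simps)
  moreover have "a / (a + b) \<le> x / (M - S + x)" using k2 pos ab by (simp add: field_simps mult.commute)
  ultimately show ?thesis unfolding Eeq by (simp only:)
qed

lemma lower_real:
  fixes a b x M T :: real
  assumes a0: "a \<ge> 0" and b0: "b \<ge> 0" and ab: "a + b > 0" and x0: "x \<ge> 0"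
    and M0: "M \<ge> 0" and T0: "T \<ge> 0"
    and key: "b * x * (M - T) \<le> a * M^2"
  shows "x / M * ((1 - T / M) * inverse (1 + x / M)) \<le> a / (a + b)"
proof (cases "M = 0")
  case True then show ?thesis using a0 ab by simp
next
  case False
  then have Mp: "M > 0" using M0 by simp
  have Mx: "M + x > 0" using Mp x0 by simp
  have e1: "1 - T / M = (M - T) / M" using Mp by (simp add: field_simps)
  have e2: "inverse (1 + x / M) = M / (M + x)" using Mp Mx by (simp add: field_simps)
  have eq: "x / M * ((1 - T / M) * inverse (1 + x / M)) = x * (M - T) / (M * (M + x))"
  proof -
    have "(M - T) / M * (M / (M + x)) = (M - T) / (M + x)" using Mp by simp
    then show ?thesis unfolding e1 e2 by simp
  qed
  show ?thesis
  proof (cases "M - T \<le> 0")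
    case True
    then have "x * (M - T) \<le> 0" using x0 by (simp add: mult_nonneg_nonpos)
    then have "x * (M - T) / (M * (M + x)) \<le> 0" using Mp x0 by (simp add: divide_nonpos_pos)
    moreover have "a / (a + b) \<ge> 0" using a0 ab by simp
    ultimately show ?thesis unfolding eq by linarith
  next
    case False
    then have MT: "M - T > 0" by simp
    have k2: "x * (M - T) * a \<le> a * M * x" using MT T0 a0 x0
      by (simp add: mult_left_mono mult_right_mono algebra_simps)
    have "x * (M - T) * (a + b) \<le> a * (M * (M + x))"
      using key k2 by (simp add: algebra_simps power2_eq_square)
    then show ?thesis unfolding eq using Mp x0 ab
      by (smt (verit, ccfv_SIG) divide_right_mono mult_pos_pos
        nonzero_mult_divide_mult_cancel_right nonzero_mult_divide_mult_cancel_right2)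
  qed
qed

lemma card_Union_list: "card (\<Union> (set Bs)) \<le> (\<Sum>B\<leftarrow>Bs. card B)"
proof (induction Bs)
  case Nil then show ?case by simp
next
  case (Cons B Bs)
  have "card (\<Union> (set (B # Bs))) = card (B \<union> \<Union> (set Bs))" by simp
  also have "\<dots> \<le> card B + card (\<Union> (set Bs))" by (rule card_Un_le)
  also have "\<dots> \<le> card B + (\<Sum>B\<leftarrow>Bs. card B)" using Cons.IH by simp
  finally show ?case by simp
qed

lemma card_cover:
  assumes "X \<subseteq> V \<union> \<Union> (set Bs)" "V \<subseteq> X" "\<forall>B\<in>set Bs. B \<subseteq> X"
  shows "card X \<le> card V + (\<Sum>B\<leftarrow>Bs. card B)"
proof -
  have "X = V \<union> \<Union> (set Bs)" using assms by blast
  then have "card X \<le> card V + card (\<Union> (set Bs))" by (metis card_Un_le)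
  then show ?thesis using card_Union_list[of Bs] by linarith
qed

lemma card_inc2:
  assumes "e1 \<noteq> e2"
  shows "card {e \<in> {e1,e2}. i \<in> e} = (if i \<in> e1 then 1 else 0) + (if i \<in> e2 then 1 else 0)"
proof -
  have "{e \<in> {e1,e2}. i \<in> e} = (if i \<in> e1 then {e1} else {}) \<union> (if i \<in> e2 then {e2} else {})" by auto
  then show ?thesis using assms by auto
qed

lemma card_inc3:
  assumes "e1 \<noteq> e2" "e1 \<noteq> e3" "e2 \<noteq> e3"
  shows "card {e \<in> {e1,e2,e3}. i \<in> e} = (if i \<in> e1 then 1 else 0) + (if i \<in> e2 then 1 else 0) + (if i \<in> e3 then 1 else 0)"
proof -
  have "{e \<in> {e1,e2,e3}. i \<in> e} = (if i \<in> e1 then {e1} else {}) \<union> ((if i \<in> e2 then {e2} else {}) \<union> (if i \<in> e3 then {e3} else {}))" by auto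
  then show ?thesis using assms by auto
qed

lemma deg_switch:
  assumes "finite G" "R \<subseteq> G" "Ad \<inter> G = {}" "finite Ad" "card {e \<in> R. i \<in> e} = card {e \<in> Ad. i \<in> e}"
  shows "deg ((G - R) \<union> Ad) i = deg G i"
proof -
  have fR: "finite R" using assms(1,2) by (rule finite_subset[rotated])
  have eq: "{e \<in> (G - R) \<union> Ad. i \<in> e} = ({e \<in> G. i \<in> e} - {e \<in> R. i \<in> e}) \<union> {e \<in> Ad. i \<in> e}" by blast
  have "card (({e \<in> G. i \<in> e} - {e \<in> R. i \<in> e}) \<union> {e \<in> Ad. i \<in> e})
        = card ({e \<in> G. i \<in> e} - {e \<in> R. i \<in> e}) + card {e \<in> Ad. i \<in> e}"
    by (rule card_Un_disjoint) (use assms in auto)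
  also have "card ({e \<in> G. i \<in> e} - {e \<in> R. i \<in> e}) = card {e \<in> G. i \<in> e} - card {e \<in> R. i \<in> e}"
    by (rule card_Diff_subset) (use assms fR in auto)
  moreover have "card {e \<in> R. i \<in> e} \<le> card {e \<in> G. i \<in> e}"
    by (rule card_mono) (use assms in auto)
  ultimately show ?thesis unfolding deg_def eq using assms(5) by simp
qed

lemma recover: "R \<subseteq> G \<Longrightarrow> Ad \<inter> G = {} \<Longrightarrow> ((G - R) \<union> Ad - Ad) \<union> R = G"
  by blast

lemma deg_mono: "graph_on n G \<Longrightarrow> E \<subseteq> G \<Longrightarrow> deg E i \<le> deg G i"
  unfolding deg_def by (rule card_mono) (auto dest: graph_on_finite)

lemma graph_on_mono: "graph_on n G \<Longrightarrow> E \<subseteq> G \<Longrightarrow> graph_on n E"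
  unfolding graph_on_def by blast

lemma finite_realizations: "finite (realizations n d)"
proof -
  have "realizations n d \<subseteq> Pow (all_edges n)" unfolding realizations_def graph_on_def by auto
  then show ?thesis by (rule finite_subset) (simp add: finite_all_edges)
qed

lemma sum_le_Delta: "S \<subseteq> {1..n} \<Longrightarrow> (\<Sum>a\<in>S. d a) \<le> card S * Delta n d"
proof -
  assume S: "S \<subseteq> {1..n}"
  have "(\<Sum>a\<in>S. d a) \<le> (\<Sum>a\<in>S. Delta n d)" by (rule sum_mono) (use S d_le_Delta in blast)
  then show ?thesis by simp
qed

context
  fixes n :: nat and d :: "nat \<Rightarrow> nat" and H1 H2 :: "nat set set" and u v :: nat
  assumes gH1: "graph_on n H1" and gH2: "graph_on n H2" and H12: "H1 \<inter> H2 = {}"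
    and un: "u \<in> {1..n}" and vn: "v \<in> {1..n}" and uv: "u \<noteq> v" and uvH: "{u, v} \<notin> H1 \<union> H2"
begin

definition "Om = {G \<in> realizations n d. H1 \<subseteq> G \<and> G \<inter> H2 = {}}"
definition "SA = {G \<in> Om. {u,v} \<in> G}"
definition "SB = {G \<in> Om. {u,v} \<notin> G}"
definition "Mn = Msum n d - 2 * card H1"

lemma finite_Om: "finite Om"
  unfolding Om_def using finite_realizations by simp

lemma finite_SA: "finite SA" unfolding SA_def using finite_Om by simp
lemma finite_SB: "finite SB" unfolding SB_def using finite_Om by simp

lemma Om_D:
  assumes "G \<in> Om"
  shows "graph_on n G" "\<And>i. i \<in> {1..n} \<Longrightarrow> deg G i = d i" "H1 \<subseteq> G" "G \<inter> H2 = {}"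
  using assms unfolding Om_def realizations_def by auto

lemma Om_E: "G \<in> Om \<Longrightarrow> graph_on n (G - H1)"
  using Om_D(1) graph_on_mono by blast

lemma deg_diff: assumes "G \<in> Om" shows "deg (G - H1) i = deg G i - deg H1 i"
proof -
  have f: "finite G" using Om_D(1)[OF assms] graph_on_finite by blast
  have "{e \<in> G - H1. i \<in> e} = {e \<in> G. i \<in> e} - {e \<in> H1. i \<in> e}" by blast
  moreover have "card ({e \<in> G. i \<in> e} - {e \<in> H1. i \<in> e}) = card {e \<in> G. i \<in> e} - card {e \<in> H1. i \<in> e}"
    by (rule card_Diff_subset) (use Om_D(3)[OF assms] f in \<open>auto intro: finite_subset\<close>)
  ultimately show ?thesis unfolding deg_def by simp
qed

lemma card_oeE: assumes "G \<in> Om" shows "card (oe (G - H1)) = Mn" "2 * card H1 \<le> Msum n d"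
proof -
  have g: "graph_on n G" using Om_D(1)[OF assms] .
  have le: "\<And>a. deg H1 a \<le> deg G a" using deg_mono[OF g Om_D(3)[OF assms]] .
  have "card (oe (G - H1)) = (\<Sum>a\<in>{1..n}. deg (G - H1) a)" by (rule card_oe[OF Om_E[OF assms]])
  also have "\<dots> = (\<Sum>a\<in>{1..n}. deg G a - deg H1 a)" using deg_diff[OF assms] by simp
  also have "\<dots> = (\<Sum>a\<in>{1..n}. deg G a) - (\<Sum>a\<in>{1..n}. deg H1 a)" by (rule sum_subtractf_nat) (use le in auto)
  also have "(\<Sum>a\<in>{1..n}. deg G a) = Msum n d" unfolding Msum_def using Om_D(2)[OF assms] by simp
  also have "(\<Sum>a\<in>{1..n}. deg H1 a) = 2 * card H1" by (rule handshake[OF gH1])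
  finally show "card (oe (G - H1)) = Mn" unfolding Mn_def .
  have "(\<Sum>a\<in>{1..n}. deg H1 a) \<le> (\<Sum>a\<in>{1..n}. deg G a)" by (rule sum_mono) (use le in auto)
  then show "2 * card H1 \<le> Msum n d" using handshake[OF gH1] Om_D(2)[OF assms] unfolding Msum_def by simp
qed

lemma bad_fst: assumes "G \<in> Om" "S \<subseteq> {1..n}"
  shows "card {p \<in> oe (G - H1). fst p \<in> S} \<le> (\<Sum>a\<in>S. d a)"
proof -
  have fS: "finite S" by (rule finite_subset[OF assms(2)]) simp
  have "card {p \<in> oe (G - H1). fst p \<in> S} \<le> (\<Sum>a\<in>S. deg (G - H1) a)"
    by (rule card_oe_fst[OF Om_E[OF assms(1)] fS])
  also have "\<dots> \<le> (\<Sum>a\<in>S. d a)"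
  proof (rule sum_mono)
    fix a assume "a \<in> S"
    then have "deg G a = d a" using Om_D(2)[OF assms(1)] assms(2) by blast
    moreover have "deg (G - H1) a \<le> deg G a" by (rule deg_mono[OF Om_D(1)[OF assms(1)]]) blast
    ultimately show "deg (G - H1) a \<le> d a" by simp
  qed
  finally show ?thesis .
qed

lemma bad_snd: assumes "G \<in> Om" "S \<subseteq> {1..n}"
  shows "card {p \<in> oe (G - H1). snd p \<in> S} \<le> (\<Sum>a\<in>S. d a)"
proof -
  have fS: "finite S" by (rule finite_subset[OF assms(2)]) simp
  have "card {p \<in> oe (G - H1). snd p \<in> S} \<le> (\<Sum>a\<in>S. deg (G - H1) a)"
    by (rule card_oe_snd[OF Om_E[OF assms(1)] fS])
  also have "\<dots> \<le> (\<Sum>a\<in>S. d a)"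
  proof (rule sum_mono)
    fix a assume "a \<in> S"
    then have "deg G a = d a" using Om_D(2)[OF assms(1)] assms(2) by blast
    moreover have "deg (G - H1) a \<le> deg G a" by (rule deg_mono[OF Om_D(1)[OF assms(1)]]) blast
    ultimately show "deg (G - H1) a \<le> d a" by simp
  qed
  finally show ?thesis .
qed

lemma bad_single: assumes "G \<in> Om" "w \<in> {1..n}"
  shows "card {p \<in> oe (G - H1). fst p \<in> {w}} \<le> Delta n d" "card {p \<in> oe (G - H1). snd p \<in> {w}} \<le> Delta n d"
  using bad_fst[OF assms(1), of "{w}"] bad_snd[OF assms(1), of "{w}"] d_le_Delta[OF assms(2), of d] assms(2) by auto

lemma bad_nbG: assumes "G \<in> Om" "w \<in> {1..n}"
  shows "card {p \<in> oe (G - H1). fst p \<in> nb G w} \<le> Jsum n d" "card {p \<in> oe (G - H1). snd p \<in> nb G w} \<le> Jsum n d"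
proof -
  have g: "graph_on n G" using Om_D(1)[OF assms(1)] .
  have s: "nb G w \<subseteq> {1..n}" by (rule nb_sub[OF g])
  have "card (nb G w) = d w" using card_nb[OF g] Om_D(2)[OF assms] by simp
  then have "card (nb G w) \<le> Delta n d" using d_le_Delta[OF assms(2)] by simp
  then have J: "(\<Sum>a\<in>nb G w. d a) \<le> Jsum n d" by (rule J_bound[OF s])
  show "card {p \<in> oe (G - H1). fst p \<in> nb G w} \<le> Jsum n d" using bad_fst[OF assms(1) s] J by linarith
  show "card {p \<in> oe (G - H1). snd p \<in> nb G w} \<le> Jsum n d" using bad_snd[OF assms(1) s] J by linarith
qed

lemma bad_nbH2: assumes "G \<in> Om"
  shows "card {p \<in> oe (G - H1). fst p \<in> nb H2 w} \<le> deg H2 w * Delta n d" "card {p \<in> oe (G - H1). snd p \<in> nb H2 w} \<le> deg H2 w * Delta n d"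
proof -
  have s: "nb H2 w \<subseteq> {1..n}" by (rule nb_sub[OF gH2])
  have J: "(\<Sum>a\<in>nb H2 w. d a) \<le> deg H2 w * Delta n d" using sum_le_Delta[OF s, of d] card_nb[OF gH2, of w] by simp
  show "card {p \<in> oe (G - H1). fst p \<in> nb H2 w} \<le> deg H2 w * Delta n d" using bad_fst[OF assms(1) s] J by linarith
  show "card {p \<in> oe (G - H1). snd p \<in> nb H2 w} \<le> deg H2 w * Delta n d" using bad_snd[OF assms(1) s] J by linarith
qed

definition "V1 G = {(a,b) \<in> oe (G - H1). a \<notin> {u,v} \<and> b \<notin> {u,v} \<and> {u,a} \<notin> G \<and> {v,b} \<notin> G \<and> {u,a} \<notin> H2 \<and> {v,b} \<notin> H2}"
definition "sw1 G a b = (G - {{u,v},{a,b}}) \<union> {{u,a},{v,b}}"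
definition "NN G = nb (G - H1) u \<times> nb (G - H1) v"

lemma V1_count: assumes "G \<in> SA"
  shows "Mn \<le> card (V1 G) + (4 * Delta n d + 2 * Jsum n d + (deg H2 u + deg H2 v) * Delta n d)"
proof -
  have G: "G \<in> Om" using assms unfolding SA_def by simp
  let ?X = "oe (G - H1)"
  let ?F = "\<lambda>S. {p \<in> ?X. fst p \<in> S}"
  let ?S = "\<lambda>S. {p \<in> ?X. snd p \<in> S}"
  define Bs where "Bs = [?F {u}, ?F {v}, ?S {u}, ?S {v}, ?F (nb G u), ?S (nb G v), ?F (nb H2 u), ?S (nb H2 v)]"
  have cov: "?X \<subseteq> V1 G \<union> \<Union> (set Bs)"
  proof
    fix p assume p: "p \<in> ?X"
    obtain a b where ab: "p = (a,b)" by (cases p)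
    show "p \<in> V1 G \<union> \<Union> (set Bs)"
      using p unfolding ab Bs_def V1_def by (auto simp: nb_def)
  qed
  have "card ?X \<le> card (V1 G) + (\<Sum>B\<leftarrow>Bs. card B)"
    by (rule card_cover[OF cov]) (auto simp: V1_def Bs_def)
  also have "(\<Sum>B\<leftarrow>Bs. card B) \<le> 4 * Delta n d + 2 * Jsum n d + (deg H2 u + deg H2 v) * Delta n d"
    unfolding Bs_def using bad_single[OF G un] bad_single[OF G vn] bad_nbG[OF G un] bad_nbG[OF G vn]
      bad_nbH2[OF G, of u] bad_nbH2[OF G, of v] by (simp add: algebra_simps)
  finally show ?thesis using card_oeE(1)[OF G] by simp
qed

lemma sw1_props: assumes "G \<in> SA" "(a,b) \<in> V1 G"
  shows "sw1 G a b \<in> SB" "(a,b) \<in> NN (sw1 G a b)"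
proof -
  have G: "G \<in> Om" and uvG: "{u,v} \<in> G" using assms unfolding SA_def by auto
  have g: "graph_on n G" by (rule Om_D(1)[OF G])
  have abG: "{a,b} \<in> G" "{a,b} \<notin> H1" and a: "a \<notin> {u,v}" and b: "b \<notin> {u,v}"
    and uaG: "{u,a} \<notin> G" and vbG: "{v,b} \<notin> G" and uaH: "{u,a} \<notin> H2" and vbH: "{v,b} \<notin> H2"
    using assms(2) unfolding V1_def oe_def by auto
  have abn: "a \<in> {1..n}" "b \<in> {1..n}" "a \<noteq> b" using edge_mem[OF g abG(1)] by auto
  have H1G: "H1 \<subseteq> G" by (rule Om_D(3)[OF G])
  have gs: "graph_on n (sw1 G a b)"
  proof -
    have "{{u,a},{v,b}} \<subseteq> all_edges n" unfolding all_edges_def using un vn abn a b by blast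
    then show ?thesis using g unfolding graph_on_def sw1_def by blast
  qed
  have degs: "deg (sw1 G a b) i = d i" if "i \<in> {1..n}" for i
  proof -
    have "deg (sw1 G a b) i = deg G i" unfolding sw1_def
    proof (rule deg_switch)
      show "finite G" by (rule graph_on_finite[OF g])
      show "{{u, v}, {a, b}} \<subseteq> G" using uvG abG by simp
      show "{{u, a}, {v, b}} \<inter> G = {}" using uaG vbG by simp
      show "finite {{u, a}, {v, b}}" by simp
      have n1: "{u,v} \<noteq> {a,b}" using a by auto
      have n2: "{u,a} \<noteq> {v,b}" using uv b by (auto simp: doubleton_eq_iff)
      show "card {e \<in> {{u, v}, {a, b}}. i \<in> e} = card {e \<in> {{u, a}, {v, b}}. i \<in> e}"
        unfolding card_inc2[OF n1] card_inc2[OF n2] using a b uv abn(3) by auto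
    qed
    then show ?thesis using Om_D(2)[OF G that] by simp
  qed
  have uvs: "{u,v} \<notin> sw1 G a b" unfolding sw1_def using a b uv by (auto simp: doubleton_eq_iff)
  have H1s: "H1 \<subseteq> sw1 G a b" unfolding sw1_def using H1G abG(2) uvH by auto
  have H2s: "sw1 G a b \<inter> H2 = {}" unfolding sw1_def using Om_D(4)[OF G] uaH vbH by auto
  show "sw1 G a b \<in> SB" unfolding SB_def Om_def realizations_def using gs degs uvs H1s H2s by auto
  have "{u,a} \<in> sw1 G a b - H1" "{v,b} \<in> sw1 G a b - H1" unfolding sw1_def using uaG vbG H1G by auto
  then show "(a,b) \<in> NN (sw1 G a b)" unfolding NN_def nb_def by auto
qed

lemma upper_count:
  "real (card SA) * (real Mn - (4 * Delta n d + 2 * Jsum n d + (deg H2 u + deg H2 v) * Delta n d))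
   \<le> real (card SB) * (real (d u - deg H1 u) * real (d v - deg H1 v))"
proof -
  let ?f = "\<lambda>(G, (a::nat, b::nat)). (sw1 G a b, (a, b))"
  have inj: "inj_on ?f (Sigma SA V1)"
  proof (rule inj_onI)
    fix x y assume x: "x \<in> Sigma SA V1" and y: "y \<in> Sigma SA V1" and e: "?f x = ?f y"
    obtain G a b where xe: "x = (G,(a,b))" by (cases x) auto
    obtain G' a' b' where ye: "y = (G',(a',b'))" by (cases y) auto
    have ab: "a' = a" "b' = b" and s: "sw1 G a b = sw1 G' a b" using e unfolding xe ye by auto
    have rec: "\<And>K. K \<in> SA \<Longrightarrow> (a,b) \<in> V1 K \<Longrightarrow> K = (sw1 K a b - {{u,a},{v,b}}) \<union> {{u,v},{a,b}}"
    proof -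
      fix K assume K: "K \<in> SA" "(a,b) \<in> V1 K"
      have "{{u,v},{a,b}} \<subseteq> K" using K unfolding SA_def V1_def oe_def by auto
      moreover have "{{u,a},{v,b}} \<inter> K = {}" using K(2) unfolding V1_def by auto
      ultimately show "K = (sw1 K a b - {{u,a},{v,b}}) \<union> {{u,v},{a,b}}"
        unfolding sw1_def by (rule recover[symmetric])
    qed
    have "G = G'" using rec[of G] rec[of G'] x y s unfolding xe ye ab by auto
    then show "x = y" unfolding xe ye ab by simp
  qed
  have img: "?f ` Sigma SA V1 \<subseteq> Sigma SB NN" using sw1_props by auto
  have finNN: "finite (NN G)" if "G \<in> SB" for G
  proof -
    have "G \<in> Om" using that unfolding SB_def by simp
    then show "finite (NN G)" unfolding NN_def using finite_nb[OF Om_E] by blast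
  qed
  have fin: "finite (Sigma SB NN)" by (rule finite_SigmaI[OF finite_SB finNN])
  have c1: "card (Sigma SA V1) \<le> card (Sigma SB NN)" by (rule card_inj_on_le[OF inj img fin])
  have finV: "finite (V1 G)" if "G \<in> SA" for G
  proof -
    have "G \<in> Om" using that unfolding SA_def by simp
    then show ?thesis unfolding V1_def using finite_oe[OF Om_E] by (auto intro: finite_subset)
  qed
  have fin1: "finite (Sigma SA V1)" by (rule finite_SigmaI[OF finite_SA finV])
  have "card (Sigma SB NN) = (\<Sum>G\<in>SB. card (NN G))" using finite_SB finNN by simp
  also have "\<dots> = (\<Sum>G\<in>SB. (d u - deg H1 u) * (d v - deg H1 v))"
  proof (rule sum.cong[OF refl])
    fix G assume "G \<in> SB"
    then have G: "G \<in> Om" unfolding SB_def by simp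
    have "card (nb (G - H1) w) = d w - deg H1 w" if "w \<in> {1..n}" for w
      using card_nb[OF Om_E[OF G]] deg_diff[OF G] Om_D(2)[OF G that] by simp
    then show "card (NN G) = (d u - deg H1 u) * (d v - deg H1 v)"
      unfolding NN_def card_cartesian_product using un vn by simp
  qed
  finally have c2: "card (Sigma SB NN) = card SB * ((d u - deg H1 u) * (d v - deg H1 v))" by simp
  have c3: "card (Sigma SA V1) = (\<Sum>G\<in>SA. card (V1 G))" using finite_SA finV by simp
  let ?K = "real Mn - (4 * Delta n d + 2 * Jsum n d + (deg H2 u + deg H2 v) * Delta n d)"
  have "real (card SA) * ?K = (\<Sum>G\<in>SA. ?K)" by simp
  also have "\<dots> \<le> (\<Sum>G\<in>SA. real (card (V1 G)))"
  proof (rule sum_mono)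
    fix G assume "G \<in> SA"
    from V1_count[OF this] show "?K \<le> real (card (V1 G))" by linarith
  qed
  also have "\<dots> = real (card (Sigma SA V1))" using c3 by simp
  also have "\<dots> \<le> real (card (Sigma SB NN))" using c1 by simp
  also have "\<dots> = real (card SB) * (real (d u - deg H1 u) * real (d v - deg H1 v))" using c2 by simp
  finally show ?thesis .
qed

lemma card_NN: assumes G: "G \<in> Om" shows "card (NN G) = (d u - deg H1 u) * (d v - deg H1 v)"
proof -
  have "card (nb (G - H1) w) = d w - deg H1 w" if "w \<in> {1..n}" for w
    using card_nb[OF Om_E[OF G]] deg_diff[OF G] Om_D(2)[OF G that] by simp
  then show ?thesis unfolding NN_def card_cartesian_product using un vn by simp
qed

lemma finite_NN: "G \<in> Om \<Longrightarrow> finite (NN G)"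
  unfolding NN_def using finite_nb[OF Om_E] by blast

definition "CD G a b = {(c,w) \<in> oe (G - H1). c \<notin> {u,v,a,b} \<and> w \<notin> {u,v,a,b} \<and> {a,c} \<notin> G \<and> {b,w} \<notin> G \<and> {a,c} \<notin> H2 \<and> {b,w} \<notin> H2}"
definition "W G = Sigma (NN G) (\<lambda>(a,b). CD G a b)"
definition "sw2 G a b c w = (G - {{u,a},{v,b},{c,w}}) \<union> {{u,v},{a,c},{b,w}}"
definition "QQ G = oe (G - H1) \<times> oe (G - H1)"

lemma NN_facts: assumes "G \<in> SB" "(a,b) \<in> NN G"
  shows "{u,a} \<in> G" "{u,a} \<notin> H1" "{v,b} \<in> G" "{v,b} \<notin> H1" "a \<in> {1..n}" "b \<in> {1..n}"
    "a \<noteq> u" "b \<noteq> v" "a \<noteq> v" "b \<noteq> u"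
proof -
  have G: "G \<in> Om" and uvG: "{u,v} \<notin> G" using assms(1) unfolding SB_def by auto
  have g: "graph_on n G" by (rule Om_D(1)[OF G])
  show e1: "{u,a} \<in> G" "{u,a} \<notin> H1" "{v,b} \<in> G" "{v,b} \<notin> H1" using assms(2) unfolding NN_def nb_def by auto
  show "a \<in> {1..n}" "a \<noteq> u" using edge_mem[OF g e1(1)] by auto
  show "b \<in> {1..n}" "b \<noteq> v" using edge_mem[OF g e1(3)] by auto
  show "a \<noteq> v" using e1(1) uvG by auto
  show "b \<noteq> u" using e1(3) uvG by (auto simp: insert_commute)
qed

lemma CD_count: assumes "G \<in> SB" "(a,b) \<in> NN G"
  shows "Mn \<le> card (CD G a b) + (2 * Jsum n d + 6 * Delta n d + 2 * (max_deg_graph n H2 * Delta n d))"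
proof -
  have G: "G \<in> Om" using assms unfolding SB_def by simp
  note f = NN_facts[OF assms]
  have uaG: "{a,u} \<in> G" and vbG: "{b,v} \<in> G" using f(1,3) by (auto simp: insert_commute)
  let ?X = "oe (G - H1)"
  let ?F = "\<lambda>S. {p \<in> ?X. fst p \<in> S}"
  let ?S = "\<lambda>S. {p \<in> ?X. snd p \<in> S}"
  define Bs where "Bs = [?F (nb G a), ?S (nb G b), ?F (nb H2 a), ?S (nb H2 b), ?F {v}, ?F {a}, ?F {b}, ?S {u}, ?S {a}, ?S {b}]"
  have cov: "?X \<subseteq> CD G a b \<union> \<Union> (set Bs)"
  proof
    fix p assume p: "p \<in> ?X"
    obtain c w where cw: "p = (c,w)" by (cases p)
    show "p \<in> CD G a b \<union> \<Union> (set Bs)"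
      using p uaG vbG unfolding cw Bs_def CD_def by (auto simp: nb_def)
  qed
  have "card ?X \<le> card (CD G a b) + (\<Sum>B\<leftarrow>Bs. card B)"
    by (rule card_cover[OF cov]) (auto simp: CD_def Bs_def)
  also have "(\<Sum>B\<leftarrow>Bs. card B) \<le> 2 * Jsum n d + 6 * Delta n d + 2 * (max_deg_graph n H2 * Delta n d)"
  proof -
    have m1: "deg H2 a * Delta n d \<le> max_deg_graph n H2 * Delta n d"
      using deg_le_maxdeg[OF f(5), of H2] by (simp add: mult_right_mono)
    have m2: "deg H2 b * Delta n d \<le> max_deg_graph n H2 * Delta n d"
      using deg_le_maxdeg[OF f(6), of H2] by (simp add: mult_right_mono)
    have sl: "(\<Sum>B\<leftarrow>Bs. card B) = card (?F (nb G a)) + card (?S (nb G b)) + card (?F (nb H2 a)) + card (?S (nb H2 b)) + card (?F {v}) + card (?F {a}) + card (?F {b}) + card (?S {u}) + card (?S {a}) + card (?S {b})"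
      by (simp only: Bs_def list.map sum_list_simps add_0_right add.assoc)
    show ?thesis
      using sl bad_single[OF G un] bad_single[OF G vn] bad_single[OF G f(5)] bad_single[OF G f(6)]
        bad_nbG[OF G f(5)] bad_nbG[OF G f(6)] bad_nbH2[OF G, of a] bad_nbH2[OF G, of b] m1 m2
      by linarith
  qed
  finally show ?thesis using card_oeE(1)[OF G] by simp
qed

lemma CD_facts: assumes "G \<in> SB" "(a,b) \<in> NN G" "(c,w) \<in> CD G a b"
  shows "{c,w} \<in> G" "{c,w} \<notin> H1" "c \<in> {1..n}" "w \<in> {1..n}" "c \<noteq> w"
    "c \<notin> {u,v,a,b}" "w \<notin> {u,v,a,b}" "{a,c} \<notin> G" "{b,w} \<notin> G" "{a,c} \<notin> H2" "{b,w} \<notin> H2"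
proof -
  have G: "G \<in> Om" using assms(1) unfolding SB_def by auto
  have g: "graph_on n G" by (rule Om_D(1)[OF G])
  show e: "{c,w} \<in> G" "{c,w} \<notin> H1" using assms(3) unfolding CD_def oe_def by auto
  show "c \<in> {1..n}" "w \<in> {1..n}" "c \<noteq> w" using edge_mem[OF g e(1)] by auto
  show "c \<notin> {u,v,a,b}" "w \<notin> {u,v,a,b}" "{a,c} \<notin> G" "{b,w} \<notin> G" "{a,c} \<notin> H2" "{b,w} \<notin> H2"
    using assms(3) unfolding CD_def by auto
qed

lemma sw2_props: assumes "G \<in> SB" "(a,b) \<in> NN G" "(c,w) \<in> CD G a b"
  shows "sw2 G a b c w \<in> SA" "((a,c),(b,w)) \<in> QQ (sw2 G a b c w)"
proof -
  have G: "G \<in> Om" and uvG: "{u,v} \<notin> G" using assms(1) unfolding SB_def by auto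
  have g: "graph_on n G" by (rule Om_D(1)[OF G])
  have H1G: "H1 \<subseteq> G" by (rule Om_D(3)[OF G])
  note f = NN_facts[OF assms(1,2)]
  note h = CD_facts[OF assms]
  have gs: "graph_on n (sw2 G a b c w)"
  proof -
    have "{{u,v},{a,c},{b,w}} \<subseteq> all_edges n" unfolding all_edges_def using un vn uv f h by blast
    then show ?thesis using g unfolding graph_on_def sw2_def by blast
  qed
  have degs: "deg (sw2 G a b c w) i = d i" if "i \<in> {1..n}" for i
  proof -
    have "deg (sw2 G a b c w) i = deg G i" unfolding sw2_def
    proof (rule deg_switch)
      show "finite G" by (rule graph_on_finite[OF g])
      show "{{u, a}, {v, b}, {c, w}} \<subseteq> G" using f h by simp
      show "{{u, v}, {a, c}, {b, w}} \<inter> G = {}" using uvG h by simp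
      show "finite {{u, v}, {a, c}, {b, w}}" by simp
      have n1: "{u,a} \<noteq> {v,b}" "{u,a} \<noteq> {c,w}" "{v,b} \<noteq> {c,w}"
        using uv f h by (auto simp: doubleton_eq_iff)
      have n2: "{u,v} \<noteq> {a,c}" "{u,v} \<noteq> {b,w}" "{a,c} \<noteq> {b,w}"
        using uv f h by (auto simp: doubleton_eq_iff)
      show "card {e \<in> {{u, a}, {v, b}, {c, w}}. i \<in> e} = card {e \<in> {{u, v}, {a, c}, {b, w}}. i \<in> e}"
        unfolding card_inc3[OF n1] card_inc3[OF n2] using uv f h by auto
    qed
    then show ?thesis using Om_D(2)[OF G that] by simp
  qed
  have uvs: "{u,v} \<in> sw2 G a b c w" unfolding sw2_def by simp
  have H1s: "H1 \<subseteq> sw2 G a b c w" unfolding sw2_def using H1G f h by auto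
  have H2s: "sw2 G a b c w \<inter> H2 = {}" unfolding sw2_def using Om_D(4)[OF G] h uvH by auto
  show "sw2 G a b c w \<in> SA" unfolding SA_def Om_def realizations_def using gs degs uvs H1s H2s by auto
  have "{a,c} \<in> sw2 G a b c w - H1" "{b,w} \<in> sw2 G a b c w - H1" unfolding sw2_def using h H1G by auto
  then show "((a,c),(b,w)) \<in> QQ (sw2 G a b c w)" unfolding QQ_def oe_def by auto
qed

lemma lower_count:
  "real (card SB) * (real (d u - deg H1 u) * real (d v - deg H1 v))
     * (real Mn - (2 * Jsum n d + 6 * Delta n d + 2 * (max_deg_graph n H2 * Delta n d)))
   \<le> real (card SA) * (real Mn)^2"
proof -
  let ?f = "\<lambda>(G, ((a::nat, b::nat), (c::nat, w::nat))). (sw2 G a b c w, ((a, c), (b, w)))"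
  have inj: "inj_on ?f (Sigma SB W)"
  proof (rule inj_onI)
    fix x y assume x: "x \<in> Sigma SB W" and y: "y \<in> Sigma SB W" and e: "?f x = ?f y"
    obtain G a b c w where xe: "x = (G,((a,b),(c,w)))" by (cases x) auto
    obtain G' a' b' c' w' where ye: "y = (G',((a',b'),(c',w')))" by (cases y) auto
    have ab: "a' = a" "b' = b" "c' = c" "w' = w" and s: "sw2 G a b c w = sw2 G' a b c w"
      using e unfolding xe ye by auto
    have rec: "K = (sw2 K a b c w - {{u,v},{a,c},{b,w}}) \<union> {{u,a},{v,b},{c,w}}"
      if K: "K \<in> SB" "((a,b),(c,w)) \<in> W K" for K
    proof -
      have K2: "(a,b) \<in> NN K" "(c,w) \<in> CD K a b" using K(2) unfolding W_def by auto
      have "{{u,a},{v,b},{c,w}} \<subseteq> K" using NN_facts[OF K(1) K2(1)] CD_facts[OF K(1) K2] by simp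
      moreover have "{{u,v},{a,c},{b,w}} \<inter> K = {}" using CD_facts[OF K(1) K2] K(1) unfolding SB_def by simp
      ultimately show ?thesis unfolding sw2_def by (rule recover[symmetric])
    qed
    have "G = G'" using rec[of G] rec[of G'] x y s unfolding xe ye ab by auto
    then show "x = y" unfolding xe ye ab by simp
  qed
  have img: "?f ` Sigma SB W \<subseteq> Sigma SA QQ"
  proof
    fix z assume "z \<in> ?f ` Sigma SB W"
    then obtain G a b c w where z: "z = ?f (G,((a,b),(c,w)))" and m: "(G,((a,b),(c,w))) \<in> Sigma SB W" by auto
    have m2: "G \<in> SB" "(a,b) \<in> NN G" "(c,w) \<in> CD G a b" using m unfolding W_def by auto
    show "z \<in> Sigma SA QQ" unfolding z using sw2_props[OF m2] by simp
  qed
  have finQ: "finite (QQ G)" if "G \<in> SA" for G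
  proof -
    have "G \<in> Om" using that unfolding SA_def by simp
    then show ?thesis unfolding QQ_def using finite_oe[OF Om_E] by blast
  qed
  have fin: "finite (Sigma SA QQ)" by (rule finite_SigmaI[OF finite_SA finQ])
  have c1: "card (Sigma SB W) \<le> card (Sigma SA QQ)" by (rule card_inj_on_le[OF inj img fin])
  have finCD: "finite (CD G a b)" if "G \<in> SB" for G a b
  proof -
    have "G \<in> Om" using that unfolding SB_def by simp
    then show ?thesis unfolding CD_def using finite_oe[OF Om_E] by (auto intro: finite_subset)
  qed
  have finW: "finite (W G)" if "G \<in> SB" for G
  proof -
    have "G \<in> Om" using that unfolding SB_def by simp
    then show ?thesis unfolding W_def using finite_NN finCD[OF that] by (auto intro!: finite_SigmaI)
  qed
  have "card (Sigma SA QQ) = (\<Sum>G\<in>SA. card (QQ G))" using finite_SA finQ by simp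
  also have "\<dots> = (\<Sum>G\<in>SA. Mn * Mn)"
  proof (rule sum.cong[OF refl])
    fix G assume "G \<in> SA"
    then have G: "G \<in> Om" unfolding SA_def by simp
    show "card (QQ G) = Mn * Mn" unfolding QQ_def card_cartesian_product card_oeE(1)[OF G] ..
  qed
  finally have c2: "card (Sigma SA QQ) = card SA * (Mn * Mn)" by simp
  have c3: "card (Sigma SB W) = (\<Sum>G\<in>SB. card (W G))" using finite_SB finW by simp
  let ?K = "real Mn - (2 * Jsum n d + 6 * Delta n d + 2 * (max_deg_graph n H2 * Delta n d))"
  let ?x = "real (d u - deg H1 u) * real (d v - deg H1 v)"
  have Wc: "?x * ?K \<le> real (card (W G))" if "G \<in> SB" for G
  proof -
    have G: "G \<in> Om" using that unfolding SB_def by simp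
    have "card (W G) = (\<Sum>p\<in>NN G. card (CD G (fst p) (snd p)))"
      unfolding W_def using finite_NN[OF G] finCD[OF that] by (simp add: case_prod_beta)
    then have "real (card (W G)) = (\<Sum>p\<in>NN G. real (card (CD G (fst p) (snd p))))" by simp
    also have "\<dots> \<ge> (\<Sum>p\<in>NN G. ?K)"
    proof (rule sum_mono)
      fix p assume p: "p \<in> NN G"
      obtain a b where ab: "p = (a,b)" by (cases p)
      have h: "real Mn \<le> real (card (CD G a b)) + real (2 * Jsum n d + 6 * Delta n d + 2 * (max_deg_graph n H2 * Delta n d))"
        using CD_count[OF that p[unfolded ab]] by (simp only: of_nat_add[symmetric] of_nat_le_iff)
      have h2: "real (2 * Jsum n d + 6 * Delta n d + 2 * (max_deg_graph n H2 * Delta n d))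
          = 2 * Jsum n d + 6 * Delta n d + 2 * (max_deg_graph n H2 * Delta n d)" by simp
      show "?K \<le> real (card (CD G (fst p) (snd p)))"
        unfolding ab using h h2 by simp
    qed
    moreover have "(\<Sum>p\<in>NN G. ?K) = ?x * ?K" using card_NN[OF G] by simp
    ultimately show ?thesis by linarith
  qed
  have "real (card SB) * ?x * ?K = (\<Sum>G\<in>SB. ?x * ?K)" by simp
  also have "\<dots> \<le> (\<Sum>G\<in>SB. real (card (W G)))" by (rule sum_mono) (rule Wc)
  also have "\<dots> = real (card (Sigma SB W))" using c3 by simp
  also have "\<dots> \<le> real (card (Sigma SA QQ))" using c1 by simp
  also have "\<dots> = real (card SA) * (real Mn)^2" using c2 by (simp add: power2_eq_square)
  finally show ?thesis .
qed

lemma final: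
  fixes M' x D J :: real
  assumes ne: "{G \<in> realizations n d. H1 \<subseteq> G \<and> G \<inter> H2 = {}} \<noteq> {}"
    and dM: "M' = real (Msum n d) - 2 * real (card H1)"
    and dx: "x = real (d u - deg H1 u) * real (d v - deg H1 v)"
    and dD: "D = real (Delta n d)" and dJ: "J = real (Jsum n d)"
  shows "(1 - (3 * J + D * (8 + real (deg H2 u) + real (deg H2 v))) / M'
            - 2 * real (card H2) * D ^ 2 / M' ^ 2 + x / M' > 0 \<longrightarrow>
         cond_prob_edge n d H1 H2 u v \<le> x / M' *
           inverse (1 - (3 * J + D * (8 + real (deg H2 u) + real (deg H2 v))) / M'
            - 2 * real (card H2) * D ^ 2 / M' ^ 2 + x / M'))
     \<and> cond_prob_edge n d H1 H2 u v \<ge> x / M' *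
           ((1 - (2 * J + 6 * D + 2 * real (max_deg_graph n H2) * D) / M')
            * inverse (1 + x / M'))"
proof -
  have Om_ne: "Om \<noteq> {}" using ne unfolding Om_def .
  then obtain G0 where G0: "G0 \<in> Om" by blast
  have le2: "2 * card H1 \<le> Msum n d" by (rule card_oeE(2)[OF G0])
  have Mr: "M' = real Mn" unfolding Mn_def dM using le2 by (simp add: of_nat_diff)
  have numer: "{G \<in> realizations n d. H1 \<subseteq> G \<and> G \<inter> H2 = {} \<and> {u, v} \<in> G} = SA"
    unfolding SA_def Om_def by auto
  have denom: "{G \<in> realizations n d. H1 \<subseteq> G \<and> G \<inter> H2 = {}} = SA \<union> SB"
    unfolding SA_def SB_def Om_def by auto
  have cOm: "card (SA \<union> SB) = card SA + card SB"
    by (rule card_Un_disjoint[OF finite_SA finite_SB]) (auto simp: SA_def SB_def)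
  have cp: "cond_prob_edge n d H1 H2 u v = real (card SA) / (real (card SA) + real (card SB))"
    unfolding cond_prob_edge_def numer denom cOm by simp
  have abpos: "real (card SA) + real (card SB) > 0"
  proof -
    have "SA \<union> SB \<noteq> {}" using ne denom by simp
    then have "card (SA \<union> SB) > 0" using finite_SA finite_SB by (simp add: card_gt_0_iff)
    then have "card SA + card SB > 0" using cOm by simp
    then have "real (card SA + card SB) > 0" by (simp only: of_nat_0_less_iff)
    then show ?thesis by (simp only: of_nat_add)
  qed
  have aM: "real (card SA) > 0 \<Longrightarrow> M' > 0"
  proof -
    assume "real (card SA) > 0"
    then have "SA \<noteq> {}" by auto
    then obtain G where G: "G \<in> SA" by blast
    then have GO: "G \<in> Om" and "{u,v} \<in> G" unfolding SA_def by auto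
    then have "(u,v) \<in> oe (G - H1)" using uvH unfolding oe_def by auto
    then have "card (oe (G - H1)) > 0" using finite_oe[OF Om_E[OF GO]] by (auto simp: card_gt_0_iff)
    then show "M' > 0" unfolding Mr card_oeE(1)[OF GO, symmetric] by simp
  qed
  have M0: "M' \<ge> 0" unfolding Mr by simp
  have x0: "x \<ge> 0" unfolding dx by simp
  have ukey: "real (card SA) * (M' - (2*J + 4*D + D*(real (deg H2 u) + real (deg H2 v)))) \<le> x * real (card SB)"
  proof -
    have "real (card SA) * (real Mn - (4 * Delta n d + 2 * Jsum n d + (deg H2 u + deg H2 v) * Delta n d))
       \<le> real (card SB) * (real (d u - deg H1 u) * real (d v - deg H1 v))" by (rule upper_count)
    moreover have "real Mn - (4 * Delta n d + 2 * Jsum n d + (deg H2 u + deg H2 v) * Delta n d)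
       = M' - (2*J + 4*D + D*(real (deg H2 u) + real (deg H2 v)))" unfolding Mr dJ dD by (simp add: algebra_simps)
    ultimately show ?thesis unfolding dx by (simp add: mult.commute)
  qed
  have lkey: "real (card SB) * x * (M' - (2 * J + 6 * D + 2 * real (max_deg_graph n H2) * D)) \<le> real (card SA) * M'^2"
  proof -
    have ineq: "real (card SB) * (real (d u - deg H1 u) * real (d v - deg H1 v))
     * (real Mn - (2 * Jsum n d + 6 * Delta n d + 2 * (max_deg_graph n H2 * Delta n d)))
     \<le> real (card SA) * (real Mn)^2" by (rule lower_count)
    have eqT: "real (2 * Jsum n d + 6 * Delta n d + 2 * (max_deg_graph n H2 * Delta n d))
       = 2 * J + 6 * D + 2 * real (max_deg_graph n H2) * D" unfolding dJ dD by (simp add: algebra_simps)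
    show ?thesis using ineq unfolding eqT dx Mr[symmetric] .
  qed
  show ?thesis
  proof (intro conjI impI)
    assume E: "1 - (3 * J + D * (8 + real (deg H2 u) + real (deg H2 v))) / M' - 2 * real (card H2) * D ^ 2 / M' ^ 2 + x / M' > 0"
    show "cond_prob_edge n d H1 H2 u v \<le> x / M' * inverse (1 - (3 * J + D * (8 + real (deg H2 u) + real (deg H2 v))) / M' - 2 * real (card H2) * D ^ 2 / M' ^ 2 + x / M')"
      unfolding cp
      by (rule upper_real[OF _ _ abpos x0 _ _ _ _ _ M0 aM ukey E]) (simp_all add: dJ dD)
  next
    show "x / M' * ((1 - (2 * J + 6 * D + 2 * real (max_deg_graph n H2) * D) / M') * inverse (1 + x / M')) \<le> cond_prob_edge n d H1 H2 u v"
      unfolding cp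
      by (rule lower_real[OF _ _ abpos x0 M0 _ lkey]) (simp_all add: dJ dD)
  qed
qed

end

theorem theorem1p1:
  fixes n :: nat and d :: "nat \<Rightarrow> nat" and H1 H2 :: "nat set set" and u v :: nat
  assumes "graphical n d"
    and "graph_on n H1" and "graph_on n H2" and "H1 \<inter> H2 = {}"
    and "\<forall>i\<in>{1..n}. deg H1 i \<le> d i"
    and "u \<in> {1..n}" and "v \<in> {1..n}" and "u \<noteq> v"
    and "{u, v} \<notin> H1 \<union> H2"
    and "{G \<in> realizations n d. H1 \<subseteq> G \<and> G \<inter> H2 = {}} \<noteq> {}"
  defines "M' \<equiv> real (Msum n d) - 2 * real (card H1)"
    and "x \<equiv> real (d u - deg H1 u) * real (d v - deg H1 v)"
    and "D \<equiv> real (Delta n d)"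
    and "J \<equiv> real (Jsum n d)"
  shows "(1 - (3 * J + D * (8 + real (deg H2 u) + real (deg H2 v))) / M'
            - 2 * real (card H2) * D ^ 2 / M' ^ 2 + x / M' > 0 \<longrightarrow>
         cond_prob_edge n d H1 H2 u v \<le> x / M' *
           inverse (1 - (3 * J + D * (8 + real (deg H2 u) + real (deg H2 v))) / M'
            - 2 * real (card H2) * D ^ 2 / M' ^ 2 + x / M'))
     \<and> cond_prob_edge n d H1 H2 u v \<ge> x / M' *
           ((1 - (2 * J + 6 * D + 2 * real (max_deg_graph n H2) * D) / M')
            * inverse (1 + x / M'))"
proof -
  show ?thesis
    by (rule final[OF assms(2,3,4,6,7,8,9) assms(10)]) (simp_all add: M'_def x_def D_def J_def)
qed

end
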